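(* Let $G$ be a finite chordal graph and let $t\ge 0$ be an integer. Then $\hat\beta_t(G)=1$.
   Context: All graphs are finite and simple. For an integer $t\ge 0$, a graph $H$ is a $t$-shallow minor ($t$-minor) of a graph $G$ if $H$ can be obtained from $G$ by contracting pairwise vertex-disjoint connected subgraphs, each of radius at most $t$, into single vertices and deleting vertices (but not edges). Equivalently, there are pairwise disjoint sets $V_v\subseteq V(G)$, $v\in V(H)$, each inducing a connected subgraph of $G$ of radius at most $t$, such that $uv\in E(H)$ if and only if some edge of $G$ joins $V_u$ and $V_v$. In particular every induced subgraph of $G$ is a $t$-minor of $G$. For a graph $H$, $\beta(H)$ denotes the clique cover number of $H$: the minimum number of cliques partitioning $V(H)$. For $x\in V(H)$, $H_x$ denotes the subgraph of $H$ induced by the closed neighborhood $N_H[x]=\{x\}\cup N_H(x)$. Define $\tilde\beta(H)=\min_{x\in V(H)}\beta(H_x)$, and $\hat\beta_t(G)=\max\{\tilde\beta(H): H \text{ a nonempty } t\text{-minor of } G\}$ (the largest reduced neighborhood clique cover number of $G$). A graph is chordal if it has no induced cycle of length at least $4$. *)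

theory Defs
  imports Main
begin

definition simple_graph :: "'a set \<Rightarrow> ('a \<Rightarrow> 'a \<Rightarrow> bool) \<Rightarrow> bool" where
  "simple_graph V E \<longleftrightarrow> finite V \<and>
     (\<forall>u v. E u v \<longrightarrow> u \<in> V \<and> v \<in> V \<and> u \<noteq> v \<and> E v u)"

definition induced_cycle :: "'a set \<Rightarrow> ('a \<Rightarrow> 'a \<Rightarrow> bool) \<Rightarrow> 'a list \<Rightarrow> bool" where
  "induced_cycle V E xs \<longleftrightarrow> distinct xs \<and> set xs \<subseteq> V \<and> length xs \<ge> 3 \<and>
     (\<forall>i<length xs. \<forall>j<length xs.
        E (xs ! i) (xs ! j) \<longleftrightarrow>
          (j = Suc i mod length xs \<or> i = Suc j mod length xs))"

definition chordal :: "'a set \<Rightarrow> ('a \<Rightarrow> 'a \<Rightarrow> bool) \<Rightarrow> bool" where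
  "chordal V E \<longleftrightarrow> (\<forall>xs. induced_cycle V E xs \<longrightarrow> length xs < 4)"

definition walk_in :: "('a \<Rightarrow> 'a \<Rightarrow> bool) \<Rightarrow> 'a set \<Rightarrow> 'a list \<Rightarrow> bool" where
  "walk_in E S xs \<longleftrightarrow> xs \<noteq> [] \<and> set xs \<subseteq> S \<and>
     (\<forall>i. Suc i < length xs \<longrightarrow> E (xs ! i) (xs ! Suc i))"

text \<open>G[S] is connected with radius at most t (S nonempty): some centre c reaches
every vertex of S by a walk in G[S] of length (number of edges) at most t.\<close>
definition conn_radius_le :: "('a \<Rightarrow> 'a \<Rightarrow> bool) \<Rightarrow> 'a set \<Rightarrow> nat \<Rightarrow> bool" where
  "conn_radius_le E S t \<longleftrightarrow> (\<exists>c\<in>S. \<forall>x\<in>S. \<exists>xs.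
      walk_in E S xs \<and> hd xs = c \<and> last xs = x \<and> length xs \<le> Suc t)"

text \<open>(W,F) is a t-shallow minor of (V,E), witnessed by branch sets Vs.
 The minor's vertices are taken from the same type as those of G (every minor is
 isomorphic to one of this form, by picking one vertex from each branch set).\<close>
definition shallow_minor :: "nat \<Rightarrow> 'a set \<Rightarrow> ('a \<Rightarrow> 'a \<Rightarrow> bool) \<Rightarrow>
    'a set \<Rightarrow> ('a \<Rightarrow> 'a \<Rightarrow> bool) \<Rightarrow> bool" where
  "shallow_minor t V E W F \<longleftrightarrow> finite W \<and> (\<exists>Vs :: 'a \<Rightarrow> 'a set.
     (\<forall>v\<in>W. Vs v \<subseteq> V \<and> Vs v \<noteq> {} \<and> conn_radius_le E (Vs v) t) \<and>
     (\<forall>u\<in>W. \<forall>v\<in>W. u \<noteq> v \<longrightarrow> Vs u \<inter> Vs v = {}) \<and>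
     (\<forall>u v. F u v \<longleftrightarrow> u \<in> W \<and> v \<in> W \<and> u \<noteq> v \<and> (\<exists>a\<in>Vs u. \<exists>b\<in>Vs v. E a b)))"

definition is_clique :: "('a \<Rightarrow> 'a \<Rightarrow> bool) \<Rightarrow> 'a set \<Rightarrow> bool" where
  "is_clique F C \<longleftrightarrow> (\<forall>x\<in>C. \<forall>y\<in>C. x \<noteq> y \<longrightarrow> F x y)"

definition clique_partition :: "'a set \<Rightarrow> ('a \<Rightarrow> 'a \<Rightarrow> bool) \<Rightarrow> 'a set set \<Rightarrow> bool" where
  "clique_partition W F P \<longleftrightarrow> \<Union>P = W \<and> (\<forall>C\<in>P. C \<noteq> {} \<and> is_clique F C) \<and>
     (\<forall>C\<in>P. \<forall>D\<in>P. C \<noteq> D \<longrightarrow> C \<inter> D = {})"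

definition clique_cover_number :: "'a set \<Rightarrow> ('a \<Rightarrow> 'a \<Rightarrow> bool) \<Rightarrow> nat" where
  "clique_cover_number W F = (LEAST n. \<exists>P. clique_partition W F P \<and> finite P \<and> card P = n)"

definition closed_nbhd :: "'a set \<Rightarrow> ('a \<Rightarrow> 'a \<Rightarrow> bool) \<Rightarrow> 'a \<Rightarrow> 'a set" where
  "closed_nbhd W F x = insert x {y\<in>W. F x y}"

text \<open>beta of H_x (induced subgraph on the closed neighbourhood); induced edges are
 just F restricted, and clique partitions only look at pairs inside the vertex set.\<close>
definition tilde_beta :: "'a set \<Rightarrow> ('a \<Rightarrow> 'a \<Rightarrow> bool) \<Rightarrow> nat" where
  "tilde_beta W F = Min ((\<lambda>x. clique_cover_number (closed_nbhd W F x)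
       (\<lambda>u v. F u v \<and> u \<in> closed_nbhd W F x \<and> v \<in> closed_nbhd W F x)) ` W)"

definition hat_beta :: "nat \<Rightarrow> 'a set \<Rightarrow> ('a \<Rightarrow> 'a \<Rightarrow> bool) \<Rightarrow> nat" where
  "hat_beta t V E = Max {tilde_beta W F | W F. shallow_minor t V E W F \<and> W \<noteq> {}}"

end

theory Submission
  imports Defs
begin

lemma walk_single[simp]: "walk_in E S [x] \<longleftrightarrow> x \<in> S"
  by (auto simp: walk_in_def)

lemma walk_Cons2: "walk_in E S (x # y # zs) \<longleftrightarrow> x \<in> S \<and> E x y \<and> walk_in E S (y # zs)"
proof
  assume h: "walk_in E S (x # y # zs)"
  then show "x \<in> S \<and> E x y \<and> walk_in E S (y # zs)"
    unfolding walk_in_def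
    by (metis Suc_less_eq insert_subset length_Cons list.set(2) list.simps(3) nth_Cons_0 nth_Cons_Suc zero_less_Suc)
next
  assume h: "x \<in> S \<and> E x y \<and> walk_in E S (y # zs)"
  show "walk_in E S (x # y # zs)"
    unfolding walk_in_def
  proof (intro conjI allI impI)
    fix i assume "Suc i < length (x # y # zs)"
    then show "E ((x # y # zs) ! i) ((x # y # zs) ! Suc i)"
      using h unfolding walk_in_def by (cases i) auto
  qed (use h in \<open>auto simp: walk_in_def\<close>)
qed

lemma walk_glue:
  assumes "walk_in E S p" "walk_in E S q" "last p = hd q"
  shows "walk_in E S (p @ tl q)"
  using assms
proof (induction p rule: induct_list012)
  case 1 then show ?case by (simp add: walk_in_def)
next
  case (2 x) then show ?case by (cases q) auto
next
  case (3 x y zs)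
  then show ?case by (auto simp: walk_Cons2)
qed

lemma walk_app:
  assumes "walk_in E S p" "walk_in E S q" "E (last p) (hd q)"
  shows "walk_in E S (p @ q)"
  using assms
proof (induction p rule: induct_list012)
  case 1 then show ?case by (simp add: walk_in_def)
next
  case (2 x) then show ?case by (cases q) (auto simp: walk_Cons2)
next
  case (3 x y zs)
  then show ?case by (auto simp: walk_Cons2)
qed

lemma walk_rev:
  assumes "walk_in E S p" "\<And>u v. E u v \<Longrightarrow> E v u"
  shows "walk_in E S (rev p)"
  using assms(1)
proof (induction p rule: induct_list012)
  case 1 then show ?case by (simp add: walk_in_def)
next
  case (2 x) then show ?case by simp
next
  case (3 x y zs)
  then have "walk_in E S (rev zs @ [y])" "E y x" "x \<in> S" using assms(2) by (auto simp: walk_Cons2)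
  then have "walk_in E S ((rev zs @ [y]) @ [x])" using walk_app[of E S "rev zs @ [y]" "[x]"] by auto
  then show ?case by simp
qed

lemma walk_mono:
  assumes "walk_in E S p" "set p \<subseteq> T" "\<And>u v. u \<in> T \<Longrightarrow> v \<in> T \<Longrightarrow> E u v \<Longrightarrow> E' u v"
  shows "walk_in E' T p"
  using assms unfolding walk_in_def
  by (metis Suc_lessD nth_mem subsetD)

lemma walk_take:
  assumes "walk_in E S p" "0 < n" shows "walk_in E S (take n p)"
  using assms unfolding walk_in_def
  by (auto dest: in_set_takeD)

lemma walk_drop:
  assumes "walk_in E S p" "n < length p" shows "walk_in E S (drop n p)"
  using assms unfolding walk_in_def
  by (auto dest: in_set_dropD)

lemma walk_nonempty: "walk_in E S p \<Longrightarrow> p \<noteq> []" by (simp add: walk_in_def)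

lemma shortcut_eq:
  assumes w: "walk_in E S p" and ij: "i < j" "j < length p" and eq: "p ! i = p ! j"
  shows "\<exists>q. walk_in E S q \<and> hd q = hd p \<and> last q = last p \<and> length q < length p"
proof -
  have ne: "p \<noteq> []" using w by (simp add: walk_in_def)
  have wt: "walk_in E S (take (Suc i) p)" using walk_take[OF w] by simp
  have lt: "last (take (Suc i) p) = p ! i"
    using ij by (simp add: take_Suc_conv_app_nth)
  have ht: "hd (take (Suc i) p) = hd p" using ne by simp
  show ?thesis
  proof (cases "Suc j < length p")
    case True
    have wd: "walk_in E S (drop (Suc j) p)" using walk_drop[OF w True] .
    have hd': "hd (drop (Suc j) p) = p ! Suc j" using True by (simp add: hd_drop_conv_nth)
    have "E (p ! j) (p ! Suc j)" using w True by (simp add: walk_in_def)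
    then have "walk_in E S (take (Suc i) p @ drop (Suc j) p)"
      using walk_app[OF wt wd] lt hd' eq by simp
    moreover have "last (take (Suc i) p @ drop (Suc j) p) = last p"
      using True by (simp add: last_drop)
    moreover have "hd (take (Suc i) p @ drop (Suc j) p) = hd p" using ne ht by simp
    moreover have "length (take (Suc i) p @ drop (Suc j) p) < length p" using ij True by simp
    ultimately show ?thesis by blast
  next
    case False
    then have "j = length p - 1" using ij by simp
    then have "last p = p ! j" using ne by (simp add: last_conv_nth)
    moreover have "length (take (Suc i) p) < length p" using ij by simp
    ultimately show ?thesis using wt lt ht eq by metis
  qed
qed

lemma shortcut_edge:
  assumes w: "walk_in E S p" and ij: "Suc i < j" "j < length p" and e: "E (p ! i) (p ! j)"
  shows "\<exists>q. walk_in E S q \<and> hd q = hd p \<and> last q = last p \<and> length q < length p"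
proof -
  have ne: "p \<noteq> []" using w by (simp add: walk_in_def)
  have wt: "walk_in E S (take (Suc i) p)" using walk_take[OF w] by simp
  have lt: "last (take (Suc i) p) = p ! i"
    using ij by (simp add: take_Suc_conv_app_nth)
  have wd: "walk_in E S (drop j p)" using walk_drop[OF w ij(2)] .
  have hd': "hd (drop j p) = p ! j" using ij by (simp add: hd_drop_conv_nth)
  have "walk_in E S (take (Suc i) p @ drop j p)"
    using walk_app[OF wt wd] lt hd' e by simp
  moreover have "last (take (Suc i) p @ drop j p) = last p"
    using ij by (simp add: last_drop)
  moreover have "hd (take (Suc i) p @ drop j p) = hd p" using ne by simp
  moreover have "length (take (Suc i) p @ drop j p) < length p" using ij by simp
  ultimately show ?thesis by blast
qed

lemma min_walk:
  assumes "walk_in E S p0" "hd p0 = x" "last p0 = y"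
  shows "\<exists>p. walk_in E S p \<and> hd p = x \<and> last p = y \<and> distinct p \<and>
     (\<forall>i j. i < j \<longrightarrow> j < length p \<longrightarrow> E (p!i) (p!j) \<longrightarrow> j = Suc i)"
proof -
  define P where "P n \<longleftrightarrow> (\<exists>p. walk_in E S p \<and> hd p = x \<and> last p = y \<and> length p = n)" for n
  have "P (length p0)" using assms unfolding P_def by blast
  then have "P (LEAST n. P n)" by (rule LeastI)
  then obtain p where p: "walk_in E S p" "hd p = x" "last p = y" "length p = (LEAST n. P n)"
    unfolding P_def by blast
  have nosh: False if "walk_in E S q" "hd q = x" "last q = y" "length q < length p" for q
    using that p(4) not_less_Least[of "length q" P] unfolding P_def by auto
  have "distinct p"
  proof (rule ccontr)
    assume "\<not> distinct p"
    then obtain i j where "i < j" "j < length p" "p ! i = p ! j"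
      by (metis distinct_conv_nth linorder_neqE_nat)
    then show False using shortcut_eq[OF p(1)] nosh p by metis
  qed
  moreover have "\<forall>i j. i < j \<longrightarrow> j < length p \<longrightarrow> E (p!i) (p!j) \<longrightarrow> j = Suc i"
  proof (intro allI impI, rule ccontr)
    fix i j assume "i < j" "j < length p" "E (p!i) (p!j)" "j \<noteq> Suc i"
    then have "Suc i < j" by simp
    then show False using shortcut_edge[OF p(1) _ \<open>j < length p\<close> \<open>E (p!i) (p!j)\<close>] nosh p by metis
  qed
  ultimately show ?thesis using p by blast
qed

lemma sg_sym: "simple_graph V E \<Longrightarrow> E u v \<Longrightarrow> E v u"
  by (simp add: simple_graph_def)
lemma sg_irr: "simple_graph V E \<Longrightarrow> \<not> E u u"
  by (auto simp add: simple_graph_def)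
lemma sg_V: "simple_graph V E \<Longrightarrow> E u v \<Longrightarrow> u \<in> V \<and> v \<in> V"
  by (simp add: simple_graph_def)

lemma mod_suc_cases: "i < m \<Longrightarrow> Suc i mod m = (if Suc i = m then 0 else Suc i)"
  by auto

lemma cycle_contra:
  assumes sg: "simple_graph V E" and ch: "chordal V E" and aV: "a \<in> V" and pV: "set p \<subseteq> V"
    and dp: "distinct p" and len: "length p \<ge> 3" and ap: "a \<notin> set p"
    and wp: "\<forall>i. Suc i < length p \<longrightarrow> E (p!i) (p!Suc i)"
    and cl: "\<forall>i j. i < j \<longrightarrow> j < length p \<longrightarrow> E (p!i) (p!j) \<longrightarrow> j = Suc i"
    and ah: "E a (hd p)" and al: "E a (last p)"
    and an: "\<forall>i. 0 < i \<longrightarrow> i < length p - 1 \<longrightarrow> \<not> E a (p!i)"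
  shows False
proof -
  let ?n = "length p"
  have Ep: "E (p!i) (p!j) \<longleftrightarrow> (j = Suc i \<or> i = Suc j)" if "i < ?n" "j < ?n" for i j
  proof -
    consider "i < j" | "i = j" | "j < i" by arith
    then show ?thesis
    proof cases
      case 1 then show ?thesis using cl wp that by auto
    next
      case 2 then show ?thesis using sg_irr[OF sg] by auto
    next
      case 3 then show ?thesis using cl wp that sg_sym[OF sg] by (metis Suc_lessD less_not_refl)
    qed
  qed
  have Ea: "E a (p!k) \<longleftrightarrow> (k = 0 \<or> k = ?n - 1)" if "k < ?n" for k
  proof -
    have ne: "p \<noteq> []" using len by auto
    have h0: "E a (p!0)" using ah ne by (simp add: hd_conv_nth)
    have hl: "E a (p!(?n-1))" using al ne by (simp add: last_conv_nth)
    show ?thesis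
    proof (cases "k = 0 \<or> k = ?n - 1")
      case True then show ?thesis using h0 hl by auto
    next
      case False then have "0 < k" "k < ?n - 1" using that by auto
      then show ?thesis using an False by auto
    qed
  qed
  have Ea': "E (p!k) a \<longleftrightarrow> (k = 0 \<or> k = ?n - 1)" if "k < ?n" for k
    using Ea[OF that] sg_sym[OF sg] by blast
  have "induced_cycle V E (a # p)"
    unfolding induced_cycle_def
  proof (intro conjI allI impI)
    show "distinct (a # p)" using dp ap by simp
    show "set (a # p) \<subseteq> V" using pV aV by simp
    show "3 \<le> length (a # p)" using len by simp
  next
    fix i j assume i: "i < length (a # p)" and j: "j < length (a # p)"
    have mi: "Suc i mod length (a#p) = (if Suc i = ?n + 1 then 0 else Suc i)"
      using mod_suc_cases[OF i] by simp
    have mj: "Suc j mod length (a#p) = (if Suc j = ?n + 1 then 0 else Suc j)"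
      using mod_suc_cases[OF j] by simp
    show "E ((a # p) ! i) ((a # p) ! j) \<longleftrightarrow>
          (j = Suc i mod length (a # p) \<or> i = Suc j mod length (a # p))"
      (is "?L \<longleftrightarrow> ?R")
    proof -
      have key: "?R \<longleftrightarrow> (j = Suc i \<and> Suc i < ?n + 1) \<or> (j = 0 \<and> i = ?n) \<or>
                 (i = Suc j \<and> Suc j < ?n + 1) \<or> (i = 0 \<and> j = ?n)"
        using mi mj i j by auto
      show ?thesis
      proof (cases i)
        case 0
        then show ?thesis
        proof (cases j)
          case 0 then show ?thesis unfolding key using \<open>i = 0\<close> sg_irr[OF sg] len by auto
        next
          case (Suc j') then show ?thesis unfolding key using \<open>i = 0\<close> Ea[of j'] j len by auto
        qed
      next
        case (Suc i')
        then show ?thesis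
        proof (cases j)
          case 0 then show ?thesis unfolding key using \<open>i = Suc i'\<close> Ea'[of i'] i len by auto
        next
          case (Suc j') then show ?thesis unfolding key using \<open>i = Suc i'\<close> Ep[of i' j'] i j len by auto
        qed
      qed
    qed
  qed
  then have "length (a # p) < 4" using ch unfolding chordal_def by blast
  then show False using len by simp
qed

definition simplicial :: "'a set \<Rightarrow> ('a \<Rightarrow> 'a \<Rightarrow> bool) \<Rightarrow> 'a \<Rightarrow> bool" where
  "simplicial V E z \<longleftrightarrow> z \<in> V \<and> (\<forall>x y. E z x \<longrightarrow> E z y \<longrightarrow> x \<noteq> y \<longrightarrow> E x y)"

definition restr :: "('a \<Rightarrow> 'a \<Rightarrow> bool) \<Rightarrow> 'a set \<Rightarrow> 'a \<Rightarrow> 'a \<Rightarrow> bool" where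
  "restr E U = (\<lambda>u v. E u v \<and> u \<in> U \<and> v \<in> U)"

lemma restr_sg: "simple_graph V E \<Longrightarrow> U \<subseteq> V \<Longrightarrow> simple_graph U (restr E U)"
  unfolding simple_graph_def restr_def by (auto intro: finite_subset)

lemma restr_chordal:
  assumes "chordal V E" "U \<subseteq> V" shows "chordal U (restr E U)"
  unfolding chordal_def
proof (intro allI impI)
  fix xs assume h: "induced_cycle U (restr E U) xs"
  then have "induced_cycle V E xs"
    unfolding induced_cycle_def restr_def using assms(2) by (auto simp: subset_iff)
  then show "length xs < 4" using assms(1) unfolding chordal_def by blast
qed

lemma glue_hd_last:
  assumes "p \<noteq> []" "q \<noteq> []" "last p = hd q"
  shows "hd (p @ tl q) = hd p" "last (p @ tl q) = last q"
  using assms by (cases q; auto simp: last_append)+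

lemma dirac:
  "simple_graph V E \<Longrightarrow> chordal V E \<Longrightarrow> a \<in> V \<Longrightarrow> b \<in> V \<Longrightarrow> a \<noteq> b \<Longrightarrow> \<not> E a b \<Longrightarrow>
   \<exists>z. z \<noteq> a \<and> \<not> E a z \<and> simplicial V E z"
proof (induction "card V" arbitrary: V E a b rule: less_induct)
  case less
  note sg = less.prems(1) and ch = less.prems(2)
  define R where "R = V - insert a {v. E a v}"
  define C where "C = {v. \<exists>p. walk_in E R p \<and> hd p = b \<and> last p = v}"
  have bR: "b \<in> R" using less.prems unfolding R_def by auto
  have bC: "b \<in> C" unfolding C_def using bR by (intro CollectI exI[of _ "[b]"]) simp
  have CR: "C \<subseteq> R" unfolding C_def
    by (auto simp: walk_in_def)
  have walkC: "set p \<subseteq> C" if "walk_in E R p" "hd p = b" for p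
  proof
    fix v assume "v \<in> set p"
    then obtain k where k: "k < length p" "p ! k = v" by (auto simp: in_set_conv_nth)
    have "walk_in E R (take (Suc k) p)" using walk_take[OF that(1)] by simp
    moreover have "hd (take (Suc k) p) = b" using that k by (cases p) auto
    moreover have "last (take (Suc k) p) = v" using k by (simp add: take_Suc_conv_app_nth)
    ultimately show "v \<in> C" unfolding C_def by blast
  qed
  have symE: "E u v \<Longrightarrow> E v u" for u v using sg_sym[OF sg] .
  have Cconn: "\<exists>p. walk_in E C p \<and> hd p = u \<and> last p = v" if uvC: "u \<in> C" "v \<in> C" for u v
  proof -
    obtain pu where pu: "walk_in E R pu" "hd pu = b" "last pu = u" using uvC C_def by auto
    obtain pv where pv: "walk_in E R pv" "hd pv = b" "last pv = v" using uvC C_def by auto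
    have wu: "walk_in E C pu" using walk_mono[OF pu(1) walkC[OF pu(1,2)]] by auto
    have wv: "walk_in E C pv" using walk_mono[OF pv(1) walkC[OF pv(1,2)]] by auto
    have wr: "walk_in E C (rev pu)" using walk_rev[OF wu] symE by blast
    have ne: "rev pu \<noteq> []" "pv \<noteq> []" using wu wv by (auto simp: walk_in_def)
    have lr: "last (rev pu) = hd pv" using pu pv ne by (simp add: last_rev)
    have "walk_in E C (rev pu @ tl pv)" using walk_glue[OF wr wv lr] .
    moreover have "hd (rev pu @ tl pv) = u" using glue_hd_last(1)[OF ne lr] pu ne by (simp add: hd_rev)
    moreover have "last (rev pu @ tl pv) = v" using glue_hd_last(2)[OF ne lr] pv by simp
    ultimately show ?thesis by blast
  qed
  define S where "S = {s \<in> V. s \<notin> C \<and> (\<exists>c\<in>C. E s c)}"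
  have SN: "E a s" if sS: "s \<in> S" for s
  proof -
    obtain c where c: "c \<in> C" "E s c" "s \<in> V" "s \<notin> C" using sS S_def by auto
    have "s \<notin> R"
    proof
      assume sR: "s \<in> R"
      obtain pc where pc: "walk_in E R pc" "hd pc = b" "last pc = c" using c C_def by auto
      have "walk_in E R (pc @ [s])" using walk_app[OF pc(1), of "[s]"] sR pc c symE by auto
      moreover have "hd (pc @ [s]) = b" using pc by (cases pc) (auto simp: walk_in_def)
      ultimately have "s \<in> C" unfolding C_def by fastforce
      then show False using c by simp
    qed
    moreover have "\<not> E a c" using c CR R_def by auto
    ultimately show ?thesis using c R_def by auto
  qed
  define U where "U = C \<union> S"
  have UV: "U \<subseteq> V" using CR R_def S_def U_def by auto
  have aU: "a \<notin> U" using CR R_def SN sg_irr[OF sg] U_def by auto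
  have finV: "finite V" using sg simple_graph_def by auto
  have "U \<subset> V" using UV aU less.prems(3) by blast
  then have cardU: "card U < card V" using psubset_card_mono[OF finV] by blast
  have nbr: "w \<in> U" if zw: "z \<in> C" "E z w" for z w
  proof (cases "w \<in> C")
    case True then show ?thesis by (simp add: U_def)
  next
    case False
    have "w \<in> V" using sg_V[OF sg zw(2)] by simp
    then have "w \<in> S" unfolding S_def using False zw symE by blast
    then show ?thesis by (simp add: U_def)
  qed
  have Sclique: "E x y" if xyS: "x \<in> S" "y \<in> S" "x \<noteq> y" for x y
  proof (rule ccontr)
    assume nxy: "\<not> E x y"
    obtain cx where cx: "cx \<in> C" "E x cx" using xyS(1) S_def by auto
    obtain cy where cy: "cy \<in> C" "E y cy" using xyS(2) S_def by auto
    obtain q where q: "walk_in E C q" "hd q = cx" "last q = cy" using Cconn[OF cx(1) cy(1)] by blast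
    define T where "T = insert x (insert y C)"
    have qset: "set q \<subseteq> T" using q(1) T_def by (auto simp: walk_in_def)
    have qT: "walk_in E T q" using walk_mono[OF q(1) qset] by blast
    have qne: "q \<noteq> []" using q(1) by (simp add: walk_in_def)
    have xT: "walk_in E T [x]" "walk_in E T [y]" using T_def by auto
    have w1: "walk_in E T ([x] @ q)" using walk_app[OF xT(1) qT] cx q by simp
    have l1: "last ([x] @ q) = cy" using q qne by simp
    have "E cy y" using cy symE by blast
    have wxy: "walk_in E T (([x] @ q) @ [y])"
      by (rule walk_app[OF w1 xT(2)]) (use l1 \<open>E cy y\<close> in simp)
    have "\<exists>p. walk_in E T p \<and> hd p = x \<and> last p = y \<and> distinct p \<and>
     (\<forall>i j. i < j \<longrightarrow> j < length p \<longrightarrow> E (p!i) (p!j) \<longrightarrow> j = Suc i)"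
      by (rule min_walk[OF wxy]) simp_all
    then obtain p where p: "walk_in E T p" "hd p = x" "last p = y" "distinct p"
      "\<forall>i j. i < j \<longrightarrow> j < length p \<longrightarrow> E (p!i) (p!j) \<longrightarrow> j = Suc i"
      by blast
    have pne: "p \<noteq> []" using p(1) by (simp add: walk_in_def)
    have h0: "p ! 0 = x" using p(2) pne by (simp add: hd_conv_nth)
    have hl: "p ! (length p - 1) = y" using p(3) pne by (simp add: last_conv_nth)
    have len: "length p \<ge> 3"
    proof (rule ccontr)
      assume "\<not> 3 \<le> length p"
      moreover have "length p > 0" using pne by simp
      ultimately have "length p = 1 \<or> length p = 2" by linarith
      then show False
      proof
        assume "length p = 1" then show False using h0 hl xyS(3) by simp
      next
        assume l2: "length p = 2"
        then have "Suc 0 < length p" by simp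
        then have "E (p!0) (p!Suc 0)" using p(1) unfolding walk_in_def by blast
        moreover have "p ! Suc 0 = y" using hl l2 by simp
        ultimately show False using h0 nxy by simp
      qed
    qed
    have pT: "set p \<subseteq> T" using p(1) by (simp add: walk_in_def)
    have interior: "p ! i \<in> C" if ii: "0 < i" "i < length p - 1" for i
    proof -
      have "p ! i \<in> T" using pT ii by auto
      moreover have il: "i < length p" using ii by arith
      moreover have l0: "0 < length p" using il by arith
      moreover have "p ! i \<noteq> x" using h0 nth_eq_iff_index_eq[OF p(4) il l0] ii by simp
      moreover have l1: "length p - 1 < length p" using il by arith
      moreover have "p ! i \<noteq> y" using hl nth_eq_iff_index_eq[OF p(4) il l1] ii by simp
      ultimately show ?thesis using T_def by auto
    qed
    have xV: "x \<in> V" "y \<in> V" using xyS S_def by auto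
    have pV: "set p \<subseteq> V" using pT T_def xV CR R_def by auto
    have aT: "a \<notin> T" using T_def CR R_def SN xyS sg_irr[OF sg] by auto
    show False
    proof (rule cycle_contra[OF sg ch less.prems(3) pV p(4) len])
      show "a \<notin> set p" using aT pT by auto
      show "\<forall>i. Suc i < length p \<longrightarrow> E (p!i) (p!Suc i)" using p(1) by (simp add: walk_in_def)
      show "\<forall>i j. i < j \<longrightarrow> j < length p \<longrightarrow> E (p!i) (p!j) \<longrightarrow> j = Suc i" using p(5) .
      show "E a (hd p)" using p(2) SN xyS by simp
      show "E a (last p)" using p(3) SN xyS by simp
      show "\<forall>i. 0 < i \<longrightarrow> i < length p - 1 \<longrightarrow> \<not> E a (p!i)"
      proof (intro allI impI)
        fix i assume "0 < i" "i < length p - 1"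
        then have "p ! i \<in> C" by (rule interior)
        then show "\<not> E a (p!i)" using CR R_def by auto
      qed
    qed
  qed
  have sgU: "simple_graph U (restr E U)" using restr_sg[OF sg UV] .
  have chU: "chordal U (restr E U)" using restr_chordal[OF ch UV] .
  have transfer: "simplicial V E z" if tz: "z \<in> C" "simplicial U (restr E U) z" for z
    unfolding simplicial_def
  proof (intro conjI allI impI)
    show "z \<in> V" using tz UV U_def by auto
    fix x y assume "E z x" "E z y" "x \<noteq> y"
    moreover have "x \<in> U" "y \<in> U" "z \<in> U" using nbr tz \<open>E z x\<close> \<open>E z y\<close> U_def by auto
    ultimately have "restr E U x y" using tz(2) unfolding simplicial_def restr_def by blast
    then show "E x y" by (simp add: restr_def)
  qed
  have zC: "z \<noteq> a \<and> \<not> E a z" if "z \<in> C" for z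
    using that CR R_def by auto
  have zU: "z \<in> U" if "simplicial U (restr E U) z" for z
    using that unfolding simplicial_def by blast
  show ?case
  proof (cases "\<forall>u\<in>U. \<forall>v\<in>U. u \<noteq> v \<longrightarrow> E u v")
    case True
    have "simplicial V E b"
      unfolding simplicial_def
    proof (intro conjI allI impI)
      show "b \<in> V" using bC UV U_def by auto
      fix x y assume "E b x" "E b y" "x \<noteq> y"
      moreover have "x \<in> U" "y \<in> U" using nbr[OF bC] \<open>E b x\<close> \<open>E b y\<close> by auto
      ultimately show "E x y" using True by blast
    qed
    moreover have "b \<noteq> a \<and> \<not> E a b" using zC[OF bC] .
    ultimately show ?thesis by blast
  next
    case False
    show ?thesis
    proof (cases "\<exists>s\<in>S. \<exists>u\<in>U. s \<noteq> u \<and> \<not> E s u")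
      case True
      then obtain s u where su: "s \<in> S" "u \<in> U" "s \<noteq> u" "\<not> E s u" by blast
      have sU: "s \<in> U" using su(1) U_def by auto
      have nr: "\<not> restr E U s u" using su(4) by (simp add: restr_def)
      obtain z where z: "z \<noteq> s" "\<not> restr E U s z" "simplicial U (restr E U) z"
        using less.hyps[OF cardU sgU chU sU su(2) su(3) nr] by blast
      have zU': "z \<in> U" using zU[OF z(3)] .
      have "z \<notin> S"
      proof
        assume "z \<in> S"
        then have "E s z" using Sclique[OF su(1) _ ] z(1) by metis
        then show False using z(2) sU zU' by (simp add: restr_def)
      qed
      then have "z \<in> C" using zU' U_def by auto
      then show ?thesis using transfer[OF _ z(3)] zC by blast
    next
      case False2: False
      obtain u v where uv: "u \<in> U" "v \<in> U" "u \<noteq> v" "\<not> E u v" using False by blast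
      have nr: "\<not> restr E U u v" using uv(4) by (simp add: restr_def)
      obtain z where z: "z \<noteq> u" "\<not> restr E U u z" "simplicial U (restr E U) z"
        using less.hyps[OF cardU sgU chU uv(1) uv(2) uv(3) nr] by blast
      have zU': "z \<in> U" using zU[OF z(3)] .
      have "z \<notin> S"
      proof
        assume "z \<in> S"
        then have "E z u" using False2 uv(1) z(1) by blast
        then have "E u z" using symE by blast
        then show False using z(2) uv(1) zU' by (simp add: restr_def)
      qed
      then have "z \<in> C" using zU' U_def by auto
      then show ?thesis using transfer[OF _ z(3)] zC by blast
    qed
  qed
qed

lemma simplicial_exists:
  assumes sg: "simple_graph V E" and ch: "chordal V E" and ne: "V \<noteq> {}"
  shows "\<exists>z. simplicial V E z"
proof (cases "\<exists>a\<in>V. \<exists>b\<in>V. a \<noteq> b \<and> \<not> E a b")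
  case True
  then obtain a b where "a \<in> V" "b \<in> V" "a \<noteq> b" "\<not> E a b" by blast
  then show ?thesis using dirac[OF sg ch] by blast
next
  case False
  obtain v where v: "v \<in> V" using ne by blast
  have "simplicial V E v" unfolding simplicial_def
  proof (intro conjI allI impI)
    show "v \<in> V" by fact
    fix x y assume "E v x" "E v y" "x \<noteq> y"
    then show "E x y" using False sg_V[OF sg] by blast
  qed
  then show ?thesis by blast
qed

definition conn :: "('a \<Rightarrow> 'a \<Rightarrow> bool) \<Rightarrow> 'a set \<Rightarrow> bool" where
  "conn E S \<longleftrightarrow> (\<forall>x\<in>S. \<forall>y\<in>S. \<exists>p. walk_in E S p \<and> hd p = x \<and> last p = y)"

definition adj :: "('a \<Rightarrow> 'a \<Rightarrow> bool) \<Rightarrow> ('a \<Rightarrow> 'a set) \<Rightarrow> 'a \<Rightarrow> 'a \<Rightarrow> bool" where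
  "adj E Vs u v \<longleftrightarrow> (\<exists>a\<in>Vs u. \<exists>b\<in>Vs v. E a b)"

lemma adj_sym: "(\<And>x y. E x y \<Longrightarrow> E y x) \<Longrightarrow> adj E Vs u v \<Longrightarrow> adj E Vs v u"
  unfolding adj_def by blast

lemma conn_restr:
  assumes "conn E S" "S \<subseteq> U" shows "conn (restr E U) S"
  unfolding conn_def
proof (intro ballI)
  fix x y assume "x \<in> S" "y \<in> S"
  then obtain p where p: "walk_in E S p" "hd p = x" "last p = y" using assms(1) conn_def by metis
  have "walk_in (restr E U) S p"
    using walk_mono[OF p(1), of S "restr E U"] p(1) assms(2) by (auto simp: walk_in_def restr_def)
  then show "\<exists>p. walk_in (restr E U) S p \<and> hd p = x \<and> last p = y" using p by blast
qed

lemma minor_simplicial: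
  "simple_graph V E \<Longrightarrow> chordal V E \<Longrightarrow> finite W \<Longrightarrow> W \<noteq> {} \<Longrightarrow>
   (\<forall>w\<in>W. Vs w \<subseteq> V \<and> Vs w \<noteq> {} \<and> conn E (Vs w)) \<Longrightarrow>
   (\<forall>u\<in>W. \<forall>v\<in>W. u \<noteq> v \<longrightarrow> Vs u \<inter> Vs v = {}) \<Longrightarrow>
   \<exists>w\<in>W. \<forall>u\<in>W. \<forall>v\<in>W. u \<noteq> w \<longrightarrow> v \<noteq> w \<longrightarrow> u \<noteq> v \<longrightarrow>
      adj E Vs w u \<longrightarrow> adj E Vs w v \<longrightarrow> adj E Vs u v"
proof (induction "card V" arbitrary: V E Vs rule: less_induct)
  case less
  note sg = less.prems(1) and ch = less.prems(2) and finW = less.prems(3) and neW = less.prems(4)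
    and bs = less.prems(5) and dj = less.prems(6)
  have symE: "E u v \<Longrightarrow> E v u" for u v using sg_sym[OF sg] .
  have VneV: "V \<noteq> {}" using neW bs by blast
  obtain s where s: "simplicial V E s" using simplicial_exists[OF sg ch VneV] by blast
  have sV: "s \<in> V" using s simplicial_def by metis
  have sE: "E x y" if "E s x" "E s y" "x \<noteq> y" for x y using s that unfolding simplicial_def by blast
  define V' where "V' = V - {s}"
  define E' where "E' = restr E V'"
  have finV: "finite V" using sg simple_graph_def by auto
  have cardV': "card V' < card V" unfolding V'_def using sV finV by (metis card_Diff1_less)
  have sg': "simple_graph V' E'" unfolding E'_def by (rule restr_sg[OF sg]) (auto simp: V'_def)
  have ch': "chordal V' E'" unfolding E'_def by (rule restr_chordal[OF ch]) (auto simp: V'_def)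
  show ?case
  proof (cases "\<exists>w0\<in>W. s \<in> Vs w0")
    case False
    have bs': "\<forall>w\<in>W. Vs w \<subseteq> V' \<and> Vs w \<noteq> {} \<and> conn E' (Vs w)"
    proof
      fix w assume w: "w \<in> W"
      have sub: "Vs w \<subseteq> V'" using bs w False V'_def by auto
      then show "Vs w \<subseteq> V' \<and> Vs w \<noteq> {} \<and> conn E' (Vs w)"
        using bs w conn_restr[of E "Vs w" V'] E'_def by auto
    qed
    have adjeq: "adj E' Vs u v \<longleftrightarrow> adj E Vs u v" if "u \<in> W" "v \<in> W" for u v
      using bs' that unfolding adj_def E'_def restr_def by blast
    obtain w where w: "w \<in> W" "\<forall>u\<in>W. \<forall>v\<in>W. u \<noteq> w \<longrightarrow> v \<noteq> w \<longrightarrow> u \<noteq> v \<longrightarrow>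
      adj E' Vs w u \<longrightarrow> adj E' Vs w v \<longrightarrow> adj E' Vs u v"
      using less.hyps[OF cardV' sg' ch' finW neW bs' dj] by blast
    show ?thesis
    proof (rule bexI[OF _ w(1)], intro ballI impI)
      fix u v assume uv: "u \<in> W" "v \<in> W" "u \<noteq> w" "v \<noteq> w" "u \<noteq> v" "adj E Vs w u" "adj E Vs w v"
      have "adj E' Vs w u" using adjeq[OF w(1) uv(1)] uv(6) by blast
      moreover have "adj E' Vs w v" using adjeq[OF w(1) uv(2)] uv(7) by blast
      ultimately have "adj E' Vs u v" using w(2) uv(1-5) by blast
      then show "adj E Vs u v" using adjeq[OF uv(1) uv(2)] by blast
    qed
  next
    case True
    then obtain w0 where w0: "w0 \<in> W" "s \<in> Vs w0" by blast
    have sother: "s \<notin> Vs w" if "w \<in> W" "w \<noteq> w0" for w using dj that w0 by blast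
    show ?thesis
    proof (cases "Vs w0 = {s}")
      case True
      show ?thesis
      proof (rule bexI[OF _ w0(1)], intro ballI impI)
        fix u v assume uv: "u \<in> W" "v \<in> W" "u \<noteq> w0" "v \<noteq> w0" "u \<noteq> v"
          "adj E Vs w0 u" "adj E Vs w0 v"
        obtain b1 where b1: "b1 \<in> Vs u" "E s b1" using uv(6) True unfolding adj_def by auto
        obtain b2 where b2: "b2 \<in> Vs v" "E s b2" using uv(7) True unfolding adj_def by auto
        have "b1 \<noteq> b2" using dj uv b1 b2 by blast
        then have "E b1 b2" using sE b1 b2 by blast
        then show "adj E Vs u v" using b1 b2 unfolding adj_def by blast
      qed
    next
      case False
      define Vs' where "Vs' = Vs(w0 := Vs w0 - {s})"
      obtain x where x: "x \<in> Vs w0" "x \<noteq> s" using False w0 by blast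
      have cw0: "conn E (Vs w0)" using bs w0 by blast
      obtain c where c: "c \<in> Vs w0" "c \<noteq> s" "E s c"
      proof -
        obtain p where p: "walk_in E (Vs w0) p" "hd p = s" "last p = x"
          using cw0 w0 x unfolding conn_def by metis
        have pne: "p \<noteq> []" using p(1) by (simp add: walk_in_def)
        have "length p \<noteq> 1"
        proof
          assume "length p = 1"
          then have "hd p = last p" using pne by (cases p) auto
          then show False using p x by simp
        qed
        then have l2: "Suc 0 < length p" using pne by (cases p) auto
        then have e: "E (p!0) (p!Suc 0)" using p(1) unfolding walk_in_def by blast
        have p0: "p!0 = s" using p(2) pne by (simp add: hd_conv_nth)
        have "p ! Suc 0 \<in> Vs w0" using p(1) l2 unfolding walk_in_def by (meson nth_mem subsetD)
        moreover have "p ! Suc 0 \<noteq> s" using e p0 sg_irr[OF sg] by metis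
        ultimately show thesis using that e p0 by metis
      qed
      have bs': "\<forall>w\<in>W. Vs' w \<subseteq> V' \<and> Vs' w \<noteq> {} \<and> conn E' (Vs' w)"
      proof
        fix w assume w: "w \<in> W"
        show "Vs' w \<subseteq> V' \<and> Vs' w \<noteq> {} \<and> conn E' (Vs' w)"
        proof (cases "w = w0")
          case False
          have sub: "Vs w \<subseteq> V'" using bs w sother[OF w False] V'_def by auto
          then show ?thesis using bs w conn_restr[of E "Vs w" V'] E'_def False Vs'_def by auto
        next
          case True
          have sub: "Vs' w0 \<subseteq> V'" using bs w0 V'_def Vs'_def by auto
          have ne: "Vs' w0 \<noteq> {}" using x Vs'_def by auto
          have "conn E (Vs w0 - {s})" unfolding conn_def
          proof (intro ballI)
            fix y z assume y: "y \<in> Vs w0 - {s}" and z: "z \<in> Vs w0 - {s}"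
            obtain p0 where p0: "walk_in E (Vs w0) p0" "hd p0 = y" "last p0 = z"
              using cw0 y z unfolding conn_def by blast
            obtain p where p: "walk_in E (Vs w0) p" "hd p = y" "last p = z" "distinct p"
              "\<forall>i j. i < j \<longrightarrow> j < length p \<longrightarrow> E (p!i) (p!j) \<longrightarrow> j = Suc i"
              using min_walk[OF p0] by blast
            have pne: "p \<noteq> []" using p(1) by (simp add: walk_in_def)
            have "s \<notin> set p"
            proof
              assume "s \<in> set p"
              then obtain i where i: "i < length p" "p ! i = s" by (auto simp: in_set_conv_nth)
              have "i \<noteq> 0"
              proof
                assume "i = 0" then have "hd p = s" using i pne by (simp add: hd_conv_nth)
                then show False using p(2) y by simp
              qed
              moreover have "i \<noteq> length p - 1"
              proof
                assume "i = length p - 1" then have "last p = s" using i pne by (simp add: last_conv_nth)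
                then show False using p(3) z by simp
              qed
              ultimately obtain k where k: "i = Suc k" "Suc (Suc k) < length p" using i
                by (metis Suc_lessI diff_Suc_1 not0_implies_Suc)
              have e1: "E (p!k) s" using p(1) k i unfolding walk_in_def by (metis Suc_lessD)
              have e2: "E s (p!Suc (Suc k))" using p(1) k i unfolding walk_in_def by metis
              have "p!k \<noteq> p!Suc (Suc k)"
                using nth_eq_iff_index_eq[OF p(4)] k by simp
              then have "E (p!k) (p!Suc (Suc k))" using sE symE e1 e2 by blast
              then have "Suc (Suc k) = Suc k" using p(5) k(2) by (meson lessI less_SucI)
              then show False by simp
            qed
            then have "walk_in E (Vs w0 - {s}) p" using walk_mono[OF p(1), of "Vs w0 - {s}" E] p(1)
              by (auto simp: walk_in_def)
            then show "\<exists>p. walk_in E (Vs w0 - {s}) p \<and> hd p = y \<and> last p = z" using p by blast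
          qed
          then have "conn E' (Vs' w0)" using conn_restr[of E "Vs w0 - {s}" V'] E'_def Vs'_def sub by auto
          then show ?thesis using True sub ne by simp
        qed
      qed
      have dj': "\<forall>u\<in>W. \<forall>v\<in>W. u \<noteq> v \<longrightarrow> Vs' u \<inter> Vs' v = {}"
        using dj unfolding Vs'_def by auto
      have symE': "E' u v \<Longrightarrow> E' v u" for u v using symE unfolding E'_def restr_def by blast
      have adjI: "adj E' Vs' u v" if "a \<in> Vs' u" "b \<in> Vs' v" "a \<in> V'" "b \<in> V'" "E a b" for u v a b
        using that unfolding adj_def E'_def restr_def by blast
      have half: "adj E' Vs' u v" if uv: "u \<in> W" "v \<in> W" "u \<noteq> v" "a \<in> Vs u" "b \<in> Vs v" "E a b" "b \<noteq> s" for u v a b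
      proof (cases "a = s")
        case False
        have a1: "a \<in> Vs' u" using uv(4) False unfolding Vs'_def by auto
        have b1: "b \<in> Vs' v" using uv(5,7) unfolding Vs'_def by auto
        have a2: "a \<in> V'" using bs uv(1,4) False unfolding V'_def by blast
        have b2: "b \<in> V'" using bs uv(2,5,7) unfolding V'_def by blast
        show ?thesis by (rule adjI[OF a1 b1 a2 b2 uv(6)])
      next
        case True
        have "u = w0"
        proof (rule ccontr)
          assume "u \<noteq> w0" then have "s \<notin> Vs u" using sother[OF uv(1)] by simp
          then show False using True uv(4) by simp
        qed
        then have vw0: "v \<noteq> w0" using uv(3) by simp
        have "Vs w0 \<inter> Vs v = {}" using dj w0(1) uv(2) vw0 by blast
        then have "b \<noteq> c" using c(1) uv(5) by blast
        moreover have "E s b" using uv(6) True by simp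
        ultimately have Ecb: "E c b" using sE[OF c(3)] by blast
        have c1: "c \<in> Vs' u" using c(1,2) \<open>u = w0\<close> unfolding Vs'_def by simp
        have b1: "b \<in> Vs' v" using uv(5) vw0 unfolding Vs'_def by simp
        have c2: "c \<in> V'" using c(1,2) bs w0(1) unfolding V'_def by blast
        have b2: "b \<in> V'" using bs uv(2,5,7) unfolding V'_def by blast
        show ?thesis by (rule adjI[OF c1 b1 c2 b2 Ecb])
      qed
      have adjeq: "adj E' Vs' u v \<longleftrightarrow> adj E Vs u v" if uv: "u \<in> W" "v \<in> W" "u \<noteq> v" for u v
      proof
        assume "adj E' Vs' u v"
        then obtain a b where "a \<in> Vs' u" "b \<in> Vs' v" "E' a b" unfolding adj_def by blast
        moreover have "Vs' u \<subseteq> Vs u" "Vs' v \<subseteq> Vs v" unfolding Vs'_def by auto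
        ultimately show "adj E Vs u v" unfolding adj_def E'_def restr_def by blast
      next
        assume "adj E Vs u v"
        then obtain a b where ab: "a \<in> Vs u" "b \<in> Vs v" "E a b" unfolding adj_def by blast
        show "adj E' Vs' u v"
        proof (cases "b = s")
          case False then show ?thesis using half[OF uv ab False] by blast
        next
          case True
          have "a \<noteq> s" using ab(3) True sg_irr[OF sg] by blast
          moreover have "v \<noteq> u" using uv(3) by simp
          moreover have "E b a" using symE ab(3) by blast
          ultimately have "adj E' Vs' v u" using half[OF uv(2) uv(1) _ ab(2) ab(1)] by blast
          then show ?thesis using adj_sym[of E' Vs' v u] symE' by blast
        qed
      qed
      obtain w where w: "w \<in> W" "\<forall>u\<in>W. \<forall>v\<in>W. u \<noteq> w \<longrightarrow> v \<noteq> w \<longrightarrow> u \<noteq> v \<longrightarrow>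
        adj E' Vs' w u \<longrightarrow> adj E' Vs' w v \<longrightarrow> adj E' Vs' u v"
        using less.hyps[OF cardV' sg' ch' finW neW bs' dj'] by blast
      show ?thesis
      proof (rule bexI[OF _ w(1)], intro ballI impI)
        fix u v assume uv: "u \<in> W" "v \<in> W" "u \<noteq> w" "v \<noteq> w" "u \<noteq> v"
          "adj E Vs w u" "adj E Vs w v"
        have wu: "w \<noteq> u" "w \<noteq> v" using uv(3,4) by auto
        have "adj E' Vs' w u" using adjeq[OF w(1) uv(1) wu(1)] uv(6) by blast
        moreover have "adj E' Vs' w v" using adjeq[OF w(1) uv(2) wu(2)] uv(7) by blast
        ultimately have "adj E' Vs' u v" using w(2) uv(1-5) by blast
        then show "adj E Vs u v" using adjeq[OF uv(1,2,5)] by blast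
      qed
    qed
  qed
qed

lemma radius_conn:
  assumes sg: "simple_graph V E" and r: "conn_radius_le E S t" shows "conn E S"
  unfolding conn_def
proof (intro ballI)
  fix x y assume x: "x \<in> S" and y: "y \<in> S"
  obtain c where c: "c \<in> S" "\<forall>x\<in>S. \<exists>xs. walk_in E S xs \<and> hd xs = c \<and> last xs = x \<and> length xs \<le> Suc t"
    using r unfolding conn_radius_le_def by blast
  obtain px where px: "walk_in E S px" "hd px = c" "last px = x" using c(2) x by blast
  obtain py where py: "walk_in E S py" "hd py = c" "last py = y" using c(2) y by blast
  have wr: "walk_in E S (rev px)" using walk_rev[OF px(1)] sg_sym[OF sg] by blast
  have ne: "rev px \<noteq> []" "py \<noteq> []" using px(1) py(1) by (auto simp: walk_in_def)
  have lr: "last (rev px) = hd py" using px py ne by (simp add: last_rev)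
  have "walk_in E S (rev px @ tl py)" using walk_glue[OF wr py(1) lr] .
  moreover have "hd (rev px @ tl py) = x" using glue_hd_last(1)[OF ne lr] px ne by (simp add: hd_rev)
  moreover have "last (rev px @ tl py) = y" using glue_hd_last(2)[OF ne lr] py by simp
  ultimately show "\<exists>p. walk_in E S p \<and> hd p = x \<and> last p = y" by blast
qed

lemma ccn_ex:
  assumes "finite N"
  shows "\<exists>P. clique_partition N F P \<and> finite P \<and> card P = card N"
proof -
  have "clique_partition N F ((\<lambda>v. {v}) ` N)"
    unfolding clique_partition_def is_clique_def by auto
  moreover have "card ((\<lambda>v. {v}) ` N) = card N" by (rule card_image) (auto simp: inj_on_def)
  ultimately show ?thesis using assms by blast
qed

lemma ccn_not0:
  assumes "N \<noteq> {}" "clique_partition N F P" "finite P" shows "card P \<noteq> 0"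
  using assms unfolding clique_partition_def by auto

lemma ccn_ge1:
  assumes "finite N" "N \<noteq> {}" shows "1 \<le> clique_cover_number N F"
proof -
  let ?Q = "\<lambda>n. \<exists>P. clique_partition N F P \<and> finite P \<and> card P = n"
  have "?Q (card N)" using ccn_ex[OF assms(1)] .
  then have "?Q (Least ?Q)" by (rule LeastI)
  then show ?thesis unfolding clique_cover_number_def using ccn_not0[OF assms(2)] by fastforce
qed

lemma ccn_one:
  assumes "N \<noteq> {}" "is_clique F N" shows "clique_cover_number N F = 1"
  unfolding clique_cover_number_def
proof (rule Least_equality)
  have "clique_partition N F {N}" using assms unfolding clique_partition_def by auto
  then show "\<exists>P. clique_partition N F P \<and> finite P \<and> card P = 1" by (intro exI[of _ "{N}"]) auto
next
  fix m assume "\<exists>P. clique_partition N F P \<and> finite P \<and> card P = m"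
  then show "1 \<le> m" using ccn_not0[OF assms(1)] by fastforce
qed

lemma tilde_beta_one:
  assumes sg: "simple_graph V E" and ch: "chordal V E" and sm: "shallow_minor t V E W F" and neW: "W \<noteq> {}"
  shows "tilde_beta W F = 1"
proof -
  have finW: "finite W" using sm shallow_minor_def by blast
  obtain Vs where Vs: "\<forall>v\<in>W. Vs v \<subseteq> V \<and> Vs v \<noteq> {} \<and> conn_radius_le E (Vs v) t"
     "\<forall>u\<in>W. \<forall>v\<in>W. u \<noteq> v \<longrightarrow> Vs u \<inter> Vs v = {}"
     "\<forall>u v. F u v \<longleftrightarrow> u \<in> W \<and> v \<in> W \<and> u \<noteq> v \<and> (\<exists>a\<in>Vs u. \<exists>b\<in>Vs v. E a b)"
    using sm unfolding shallow_minor_def by blast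
  have bs: "\<forall>w\<in>W. Vs w \<subseteq> V \<and> Vs w \<noteq> {} \<and> conn E (Vs w)"
  proof
    fix w assume "w \<in> W"
    then show "Vs w \<subseteq> V \<and> Vs w \<noteq> {} \<and> conn E (Vs w)" using Vs(1) radius_conn[OF sg, of "Vs w" t] by simp
  qed
  have Fadj: "F u v \<longleftrightarrow> u \<in> W \<and> v \<in> W \<and> u \<noteq> v \<and> adj E Vs u v" for u v
    using Vs(3) unfolding adj_def by simp
  have Fsym: "F v u" if Fuv: "F u v" for u v
  proof -
    have h: "u \<in> W" "v \<in> W" "u \<noteq> v" "adj E Vs u v" using Fuv Fadj[of u v] by auto
    have "adj E Vs v u" using adj_sym[of E Vs u v] sg_sym[OF sg] h(4) by blast
    then show ?thesis using h Fadj[of v u] by auto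
  qed
  obtain w where w: "w \<in> W" "\<forall>u\<in>W. \<forall>v\<in>W. u \<noteq> w \<longrightarrow> v \<noteq> w \<longrightarrow> u \<noteq> v \<longrightarrow>
      adj E Vs w u \<longrightarrow> adj E Vs w v \<longrightarrow> adj E Vs u v"
    using minor_simplicial[OF sg ch finW neW bs Vs(2)] by blast
  let ?f = "\<lambda>x. clique_cover_number (closed_nbhd W F x)
       (\<lambda>u v. F u v \<and> u \<in> closed_nbhd W F x \<and> v \<in> closed_nbhd W F x)"
  have ge: "1 \<le> ?f x" if "x \<in> W" for x
  proof (rule ccn_ge1)
    show "finite (closed_nbhd W F x)" using finW unfolding closed_nbhd_def by simp
    show "closed_nbhd W F x \<noteq> {}" unfolding closed_nbhd_def by simp
  qed
  have eq: "?f w = 1"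
  proof (rule ccn_one)
    show "closed_nbhd W F w \<noteq> {}" unfolding closed_nbhd_def by simp
    show "is_clique (\<lambda>u v. F u v \<and> u \<in> closed_nbhd W F w \<and> v \<in> closed_nbhd W F w) (closed_nbhd W F w)"
      unfolding is_clique_def
    proof (intro ballI impI conjI)
      fix x y assume x: "x \<in> closed_nbhd W F w" and y: "y \<in> closed_nbhd W F w" and xy: "x \<noteq> y"
      show "x \<in> closed_nbhd W F w" "y \<in> closed_nbhd W F w" using x y .
      show "F x y"
      proof (cases "x = w")
        case True
        then have "y \<in> {y \<in> W. F w y}" using y xy unfolding closed_nbhd_def by auto
        then have "F w y" by simp
        then show ?thesis using True by simp
      next
        case xw: False
        then have "x \<in> {y \<in> W. F w y}" using x unfolding closed_nbhd_def by auto
        then have Fwx: "F w x" by simp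
        show ?thesis
        proof (cases "y = w")
          case True then show ?thesis using Fsym[OF Fwx] by simp
        next
          case yw: False
          then have "y \<in> {y \<in> W. F w y}" using y unfolding closed_nbhd_def by auto
          then have Fwy: "F w y" by simp
          have "adj E Vs w x" "x \<in> W" using Fwx Fadj[of w x] by auto
          moreover have "adj E Vs w y" "y \<in> W" using Fwy Fadj[of w y] by auto
          ultimately have "adj E Vs x y" using w(2) xw yw xy by blast
          then show ?thesis using Fadj[of x y] \<open>x \<in> W\<close> \<open>y \<in> W\<close> xy by blast
        qed
      qed
    qed
  qed
  show ?thesis unfolding tilde_beta_def
  proof (rule Min_eqI)
    show "finite (?f ` W)" using finW by simp
    fix y assume "y \<in> ?f ` W"
    then obtain x where "x \<in> W" "y = ?f x" by (rule imageE) auto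
    then show "1 \<le> y" using ge[of x] by simp
  next
    show "1 \<in> ?f ` W" by (rule image_eqI[OF _ w(1)]) (use eq in simp)
  qed
qed

theorem theorem2p1:
  fixes V :: "'a set" and E :: "'a \<Rightarrow> 'a \<Rightarrow> bool" and t :: nat
  assumes "simple_graph V E" and "V \<noteq> {}" and "chordal V E"
  shows "hat_beta t V E = 1"
proof -
  let ?A = "{tilde_beta W F | W F. shallow_minor t V E W F \<and> W \<noteq> {}}"
  obtain a where a: "a \<in> V" using assms(2) by blast
  have cr: "conn_radius_le E {a} t"
    unfolding conn_radius_le_def
  proof (rule bexI[of _ a])
    show "\<forall>x\<in>{a}. \<exists>xs. walk_in E {a} xs \<and> hd xs = a \<and> last xs = x \<and> length xs \<le> Suc t"
      by (intro ballI exI[of _ "[a]"]) simp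
  qed simp
  have sm: "shallow_minor t V E {a} (\<lambda>_ _. False)"
    unfolding shallow_minor_def
  proof (intro conjI exI[of _ "\<lambda>_. {a}"])
    show "finite {a}" by simp
    show "\<forall>v\<in>{a}. {a} \<subseteq> V \<and> {a} \<noteq> {} \<and> conn_radius_le E {a} t"
      using a cr by simp
    show "\<forall>u\<in>{a}. \<forall>v\<in>{a}. u \<noteq> v \<longrightarrow> {a} \<inter> {a} = {}" by simp
    show "\<forall>u v. False \<longleftrightarrow> u \<in> {a} \<and> v \<in> {a} \<and> u \<noteq> v \<and> (\<exists>x\<in>{a}. \<exists>y\<in>{a}. E x y)"
      by simp
  qed
  have m: "tilde_beta {a} (\<lambda>_ _. False) \<in> ?A"
    unfolding mem_Collect_eq by (rule exI[of _ "{a}"], rule exI[of _ "\<lambda>_ _. False"]) (simp add: sm)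
  have all: "x = 1" if "x \<in> ?A" for x
  proof -
    from that obtain W F where h: "x = tilde_beta W F" "shallow_minor t V E W F" "W \<noteq> {}"
      unfolding mem_Collect_eq by blast
    then show ?thesis using tilde_beta_one[OF assms(1,3) h(2,3)] by simp
  qed
  have "?A = {1}"
  proof
    show "?A \<subseteq> {1}" using all by blast
    have "tilde_beta {a} (\<lambda>_ _. False) = 1" using all[OF m] .
    then show "{1} \<subseteq> ?A" using m by simp
  qed
  then show ?thesis unfolding hat_beta_def by simp
qed

end
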